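(* Let $A$ be a Banach algebra, $(\pi_1,X,\pi_2)$ a Banach $A$-module and $D:A\to X^*$ a derivation. Then for all $a^{**},b^{**}\in A^{**}$: (i) $D^{**}(a^{**}\Box b^{**})=\pi_1^{****}(D^{**}(a^{**}),b^{**})+\pi_2^{r*r***}(a^{**},D^{**}(b^{**}))$; (ii) $D^{**}(a^{**}\lozenge b^{**})=\pi_1^{*r***r}(D^{**}(a^{**}),b^{**})+\pi_2^{r****r}(a^{**},D^{**}(b^{**}))$.
   Context: Normed spaces are identified with their canonical images in their second duals. For a bounded bilinear map $f:X\times Y\to Z$, the adjoint $f^*:Z^*\times X\to Y^*$ is defined by $\langle f^*(z^*,x),y\rangle=\langle z^*,f(x,y)\rangle$; iterating gives $f^{**}:Y^{**}\times Z^*\to X^*$, $f^{***}:X^{**}\times Y^{**}\to Z^{**}$, $f^{****}:Z^{***}\times X^{**}\to Y^{***}$, etc. The flip is $f^r(y,x)=f(x,y)$; superscripts are applied successively left to right (e.g. $\pi_2^{r*r***}$: flip $\pi_2$, adjoint, flip, three adjoints; $\pi_1^{*r***r}$: adjoint, flip, three adjoints, flip). For the multiplication $\pi$ of $A$, the Arens products on $A^{**}$ are $a^{**}\Box b^{**}=\pi^{***}(a^{**},b^{**})$ and $a^{**}\lozenge b^{**}=\pi^{r***r}(a^{**},b^{**})$. A Banach $A$-module $(\pi_1,X,\pi_2)$ consists of a Banach space $X$ and bounded bilinear maps $\pi_1:A\times X\to X$, $\pi_2:X\times A\to X$ with $\pi_1(ab,x)=\pi_1(a,\pi_1(b,x))$,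 $\pi_2(x,ab)=\pi_2(\pi_2(x,a),b)$, $\pi_1(a,\pi_2(x,b))=\pi_2(\pi_1(a,x),b)$. A derivation $D:A\to X^*$ is a bounded linear map with $D(ab)=\pi_1^*(D(a),b)+\pi_2^{r*r}(a,D(b))$ for all $a,b\in A$ (here $\pi_1^*:X^*\times A\to X^*$ and $\pi_2^{r*r}:A\times X^*\to X^*$ are the dual module actions). $D^{**}:A^{**}\to X^{***}$ is the second adjoint of $D$. *)

theory Defs
  imports "HOL-Analysis.Analysis"
begin

definition flip :: "('x \<Rightarrow> 'y \<Rightarrow> 'z) \<Rightarrow> 'y \<Rightarrow> 'x \<Rightarrow> 'z" where
  "flip f y x = f x y"

definition adj :: "('x \<Rightarrow> 'y::real_normed_vector \<Rightarrow> 'z::real_normed_vector)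
    \<Rightarrow> ('z \<Rightarrow>\<^sub>L real) \<Rightarrow> 'x \<Rightarrow> ('y \<Rightarrow>\<^sub>L real)" where
  "adj f zs x = Blinfun (\<lambda>y. blinfun_apply zs (f x y))"

definition ladj :: "('e::real_normed_vector \<Rightarrow>\<^sub>L 'f::real_normed_vector)
    \<Rightarrow> (('f \<Rightarrow>\<^sub>L real) \<Rightarrow>\<^sub>L ('e \<Rightarrow>\<^sub>L real))" where
  "ladj T = Blinfun (\<lambda>g. g o\<^sub>L T)"

definition banach_module ::
  "('a::real_normed_algebra \<Rightarrow> 'x::banach \<Rightarrow> 'x) \<Rightarrow> ('x \<Rightarrow> 'a \<Rightarrow> 'x) \<Rightarrow> bool" where
  "banach_module \<pi>1 \<pi>2 \<longleftrightarrow> bounded_bilinear \<pi>1 \<and> bounded_bilinear \<pi>2 \<and>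
     (\<forall>a b x. \<pi>1 (a * b) x = \<pi>1 a (\<pi>1 b x)) \<and>
     (\<forall>a b x. \<pi>2 x (a * b) = \<pi>2 (\<pi>2 x a) b) \<and>
     (\<forall>a b x. \<pi>1 a (\<pi>2 x b) = \<pi>2 (\<pi>1 a x) b)"

text \<open>Derivation D : A -> X*: D(ab) = pi1*(D a, b) + pi2^{r*r}(a, D b).\<close>
definition derivation ::
  "('a::real_normed_algebra \<Rightarrow> 'x::real_normed_vector \<Rightarrow> 'x) \<Rightarrow> ('x \<Rightarrow> 'a \<Rightarrow> 'x)
     \<Rightarrow> ('a \<Rightarrow>\<^sub>L ('x \<Rightarrow>\<^sub>L real)) \<Rightarrow> bool" where
  "derivation \<pi>1 \<pi>2 D \<longleftrightarrow> (\<forall>a b. blinfun_apply D (a * b) =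
      adj \<pi>1 (blinfun_apply D a) b + flip (adj (flip \<pi>2)) a (blinfun_apply D b))"

end

theory Submission
  imports Defs
begin
lemma adj_apply:
  assumes "bounded_bilinear f"
  shows "blinfun_apply (adj f zs x) y = blinfun_apply zs (f x y)"
proof -
  have "bounded_linear (\<lambda>y. blinfun_apply zs (f x y))"
    using bounded_linear_compose[OF blinfun.bounded_linear_right bounded_bilinear.bounded_linear_right[OF assms]] .
  then show ?thesis unfolding adj_def by (simp add: bounded_linear_Blinfun_apply)
qed

lemma adj_bb:
  assumes bb: "bounded_bilinear f"
  shows "bounded_bilinear (adj f)"
proof
  fix a a' b b' and r :: real
  show "adj f (a + a') b = adj f a b + adj f a' b"
    by (rule blinfun_eqI) (simp add: adj_apply[OF bb] blinfun.add_left)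
  show "adj f a (b + b') = adj f a b + adj f a b'"
    by (rule blinfun_eqI) (simp add: adj_apply[OF bb] bounded_bilinear.add_left[OF bb] bounded_bilinear.add_right[OF bb] blinfun.add_right plus_blinfun.rep_eq)
  show "adj f (r *\<^sub>R a) b = r *\<^sub>R adj f a b"
    by (rule blinfun_eqI) (simp add: adj_apply[OF bb] scaleR_blinfun.rep_eq)
  show "adj f a (r *\<^sub>R b) = r *\<^sub>R adj f a b"
    by (rule blinfun_eqI) (simp add: adj_apply[OF bb] bounded_bilinear.scaleR_left[OF bb] blinfun.scaleR_right scaleR_blinfun.rep_eq)
  obtain K where K: "\<And>a b. norm (f a b) \<le> norm a * norm b * K" and K0: "K > 0"
    using bounded_bilinear.pos_bounded[OF bb] by blast
  show "\<exists>K. \<forall>a b. norm (adj f a b) \<le> norm a * norm b * K"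
  proof (intro exI allI)
    fix zs x
    show "norm (adj f zs x) \<le> norm zs * norm x * K"
    proof (rule norm_blinfun_bound)
      show "0 \<le> norm zs * norm x * K" using K0 by simp
      fix y
      have "norm (blinfun_apply zs (f x y)) \<le> norm zs * norm (f x y)" by (rule norm_blinfun)
      also have "\<dots> \<le> norm zs * (norm x * norm y * K)" by (rule mult_left_mono[OF K]) simp
      finally show "norm (blinfun_apply (adj f zs x) y) \<le> norm zs * norm x * K * norm y"
        by (simp add: adj_apply[OF bb] mult_ac)
    qed
  qed
qed

lemma flip_bb: "bounded_bilinear f \<Longrightarrow> bounded_bilinear (flip f)"
  unfolding flip_def by (rule bounded_bilinear.flip)

lemma flip_apply: "flip f y x = f x y" by (simp add: flip_def)

lemma ladj_apply: "blinfun_apply (ladj T) g = g o\<^sub>L T"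
proof -
  have bl: "bounded_linear (\<lambda>g. g o\<^sub>L T)" by (rule bounded_bilinear.bounded_linear_left[OF bounded_bilinear_blinfun_compose])
  show ?thesis unfolding ladj_def by (simp add: bounded_linear_Blinfun_apply[OF bl])
qed


theorem lemma4p1:
  fixes \<pi>1 :: "'a::{real_normed_algebra,banach} \<Rightarrow> 'x::banach \<Rightarrow> 'x"
    and \<pi>2 :: "'x \<Rightarrow> 'a \<Rightarrow> 'x"
    and D :: "'a \<Rightarrow>\<^sub>L ('x \<Rightarrow>\<^sub>L real)"
    and a2 b2 :: "('a \<Rightarrow>\<^sub>L real) \<Rightarrow>\<^sub>L real"
  assumes "banach_module \<pi>1 \<pi>2"
    and "derivation \<pi>1 \<pi>2 D"
  shows "(blinfun_apply (ladj (ladj D)) (adj (adj (adj (*))) a2 b2) =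
           adj (adj (adj (adj \<pi>1))) (blinfun_apply (ladj (ladj D)) a2) b2
         + adj (adj (adj (flip (adj (flip \<pi>2))))) a2 (blinfun_apply (ladj (ladj D)) b2))
       \<and> (blinfun_apply (ladj (ladj D)) (flip (adj (adj (adj (flip (*))))) a2 b2) =
           flip (adj (adj (adj (flip (adj \<pi>1))))) (blinfun_apply (ladj (ladj D)) a2) b2
         + flip (adj (adj (adj (adj (flip \<pi>2))))) a2 (blinfun_apply (ladj (ladj D)) b2))"
proof -
  have m1: "bounded_bilinear \<pi>1" and m2: "bounded_bilinear \<pi>2"
    using assms(1) unfolding banach_module_def by auto
  have der: "\<And>a b. blinfun_apply D (a * b) =
      adj \<pi>1 (blinfun_apply D a) b + flip (adj (flip \<pi>2)) a (blinfun_apply D b)"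
    using assms(2) unfolding derivation_def by auto
  note bbs = adj_bb flip_bb m1 m2 bounded_bilinear_mult
  note aps = adj_apply flip_apply ladj_apply
  show ?thesis
  proof (rule conjI; rule blinfun_eqI)
    fix x2
    show "blinfun_apply (blinfun_apply (ladj (ladj D)) (adj (adj (adj (*))) a2 b2)) x2 =
      blinfun_apply (adj (adj (adj (adj \<pi>1))) (blinfun_apply (ladj (ladj D)) a2) b2 +
        adj (adj (adj (flip (adj (flip \<pi>2))))) a2 (blinfun_apply (ladj (ladj D)) b2)) x2"
      apply (simp add: aps bbs blinfun.add_left flip: blinfun.add_right)
      apply (rule arg_cong[where f="blinfun_apply a2"])
      apply (rule blinfun_eqI)
      apply (simp add: aps bbs blinfun.add_left der flip: blinfun.add_right)
      apply (rule arg_cong[where f="blinfun_apply b2"])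
      apply (rule blinfun_eqI)
      apply (simp add: aps bbs blinfun.add_left der flip: blinfun.add_right)
      done
  next
    fix x2
    show "blinfun_apply (blinfun_apply (ladj (ladj D)) (flip (adj (adj (adj (flip (*))))) a2 b2)) x2 =
      blinfun_apply (flip (adj (adj (adj (flip (adj \<pi>1))))) (blinfun_apply (ladj (ladj D)) a2) b2 +
        flip (adj (adj (adj (adj (flip \<pi>2))))) a2 (blinfun_apply (ladj (ladj D)) b2)) x2"
      apply (simp add: aps bbs blinfun.add_left flip: blinfun.add_right)
      apply (rule arg_cong[where f="blinfun_apply b2"])
      apply (rule blinfun_eqI)
      apply (simp add: aps bbs blinfun.add_left der flip: blinfun.add_right)
      apply (rule arg_cong[where f="blinfun_apply a2"])
      apply (rule blinfun_eqI)
      apply (simp add: aps bbs blinfun.add_left der flip: blinfun.add_right)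
      done
  qed
qed

end
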